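(* Let $m\ge2$, $k\ge1$ be integers, $\alpha\in(1,m^{1/k})$, $\tau>0$, and $\Theta\sim U[0,1]$. Then: (1) $\mathbb{E}_\Theta[\mathcal{R}^\alpha_{m,k,\Theta}(t)]=\frac{k}{\ln m}\left(\alpha+\frac{m^{1/k}}{\alpha}-2\right)t$ for every $t>0$; (2) $\mathbb{E}_\Theta\!\left[\frac{1}{\mathcal{R}^\alpha_{m,k,\Theta}(t)}\right]=\frac{k}{\ln m}\left(2-\frac1\alpha-\frac{\alpha}{m^{1/k}}\right)\frac1t$ for every $t>0$; (3) $\mathbb{E}_\Theta[\mathcal{D}^\alpha_{m,k,\Theta}]=\frac{k}{\ln m}\left(\left(1-\frac{\alpha}{m^{1/k}}\right)\Sigma^{\alpha,\mathrm{prim}}_{m,k}+\left(1-\frac1\alpha\right)\Sigma^{\alpha,\mathrm{sec}}_{m,k}\right)\frac1\tau$.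
   Context: Primary grid $\mathcal{G}_{m,k}=\{m^{p/k}\tau:p\in\mathbb{Z}\}$, secondary grid $\mathcal{G}^\alpha_{m,k}=\{\alpha m^{p/k}\tau:p\in\mathbb{Z}\}$; for $\theta\in[0,1]$ the shifted interleaved grid is $\mathcal{H}^\alpha_{m,k,\theta}=\{m^{\theta/k}g:g\in\mathcal{G}_{m,k}\cup\mathcal{G}^\alpha_{m,k}\}$, and $\mathcal{R}^\alpha_{m,k,\theta}(t)=\min\{g\in\mathcal{H}^\alpha_{m,k,\theta}:g>t\}$ for $t>0$. For $g>0$, $\Delta\ge0$, $\mathcal{M}_{g,\Delta}=\{0,g,\dots,\lfloor\Delta/g\rfloor g\}$. Density coefficient: $\mathcal{D}^\alpha_{m,k,\theta}=\lim_{\Delta\to\infty}\frac1\Delta\big|\bigcup_{g\in\mathcal{H}^\alpha_{m,k,\theta}\cap[\mathcal{R}^\alpha_{m,k,\theta}(\tau),\infty)}\mathcal{M}_{g,\Delta}\big|$. For a finite $\mathcal{N}\subseteq\mathbb{R}_{>0}$, $\mathrm{LCM}(\mathcal{N})$ is the smallest positive real that is an integer multiple of every element of $\mathcal{N}$, or $\infty$ if none exists; $1/\infty=0$. Let $\mathcal{S}^{\alpha,\mathrm{prim}}_{m,k}=\{m^{(\kappa-1)/k}\}_{\kappa\in[k]}\cup\{\alpha m^{(\kappa-1)/k}\}_{\kappa\in[k]}$, $\mathcal{S}^{\alpha,\mathrm{sec}}_{m,k}=\{m^{(\kappa-1)/k}\}_{\kappa\in[k]}\cup\{\frac1\alpha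 m^{\kappa/k}\}_{\kappa\in[k]}$, and $\Sigma^{\alpha,\mathrm{prim}}_{m,k}=\sum_{\emptyset\ne\mathcal{N}\subseteq\mathcal{S}^{\alpha,\mathrm{prim}}_{m,k}}\frac{(-1)^{|\mathcal{N}|+1}}{\mathrm{LCM}(\mathcal{N})}$, $\Sigma^{\alpha,\mathrm{sec}}_{m,k}=\sum_{\emptyset\ne\mathcal{N}\subseteq\mathcal{S}^{\alpha,\mathrm{sec}}_{m,k}}\frac{(-1)^{|\mathcal{N}|+1}}{\mathrm{LCM}(\mathcal{N})}$. *)

theory Defs
  imports "HOL-Analysis.Analysis"
begin

definition prim_grid :: "nat \<Rightarrow> nat \<Rightarrow> real \<Rightarrow> real set" where
  "prim_grid m k \<tau> = {real m powr (real_of_int p / real k) * \<tau> | p :: int. True}"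

definition sec_grid :: "nat \<Rightarrow> nat \<Rightarrow> real \<Rightarrow> real \<Rightarrow> real set" where
  "sec_grid m k \<alpha> \<tau> = {\<alpha> * real m powr (real_of_int p / real k) * \<tau> | p :: int. True}"

definition shifted_grid :: "nat \<Rightarrow> nat \<Rightarrow> real \<Rightarrow> real \<Rightarrow> real \<Rightarrow> real set" where
  "shifted_grid m k \<alpha> \<theta> \<tau> =
     {real m powr (\<theta> / real k) * g | g. g \<in> prim_grid m k \<tau> \<union> sec_grid m k \<alpha> \<tau>}"

definition next_grid :: "nat \<Rightarrow> nat \<Rightarrow> real \<Rightarrow> real \<Rightarrow> real \<Rightarrow> real \<Rightarrow> real" where
  "next_grid m k \<alpha> \<theta> \<tau> t = (LEAST g. g \<in> shifted_grid m k \<alpha> \<theta> \<tau> \<and> g > t)"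

definition mult_set :: "real \<Rightarrow> real \<Rightarrow> real set" where
  "mult_set g \<Delta> = {real j * g | j :: nat. int j \<le> \<lfloor>\<Delta> / g\<rfloor>}"

definition density_coeff :: "nat \<Rightarrow> nat \<Rightarrow> real \<Rightarrow> real \<Rightarrow> real \<Rightarrow> real" where
  "density_coeff m k \<alpha> \<theta> \<tau> =
     Lim at_top (\<lambda>\<Delta>. real (card (\<Union>g \<in> shifted_grid m k \<alpha> \<theta> \<tau> \<inter> {next_grid m k \<alpha> \<theta> \<tau> \<tau>..}.
                                       mult_set g \<Delta>)) / \<Delta>)"

definition real_common_multiple :: "real set \<Rightarrow> real \<Rightarrow> bool" where
  "real_common_multiple N L \<longleftrightarrow> L > 0 \<and> (\<forall>x \<in> N. \<exists>n :: int. L = real_of_int n * x)"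

definition real_LCM :: "real set \<Rightarrow> ereal" where
  "real_LCM N = (if \<exists>L. real_common_multiple N L
                 then ereal (LEAST L. real_common_multiple N L) else \<infinity>)"

definition inv_LCM :: "real set \<Rightarrow> real" where
  "inv_LCM N = (case real_LCM N of ereal L \<Rightarrow> 1 / L | _ \<Rightarrow> 0)"

definition S_prim :: "nat \<Rightarrow> nat \<Rightarrow> real \<Rightarrow> real set" where
  "S_prim m k \<alpha> = (\<lambda>\<kappa>. real m powr ((real \<kappa> - 1) / real k)) ` {1..k}
                 \<union> (\<lambda>\<kappa>. \<alpha> * real m powr ((real \<kappa> - 1) / real k)) ` {1..k}"

definition S_sec :: "nat \<Rightarrow> nat \<Rightarrow> real \<Rightarrow> real set" where
  "S_sec m k \<alpha> = (\<lambda>\<kappa>. real m powr ((real \<kappa> - 1) / real k)) ` {1..k}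
                 \<union> (\<lambda>\<kappa>. (1 / \<alpha>) * real m powr (real \<kappa> / real k)) ` {1..k}"

definition incl_excl_sum :: "real set \<Rightarrow> real" where
  "incl_excl_sum S = (\<Sum>N | N \<subseteq> S \<and> N \<noteq> {}. (-1) ^ (card N + 1) * inv_LCM N)"

definition Sigma_prim :: "nat \<Rightarrow> nat \<Rightarrow> real \<Rightarrow> real" where
  "Sigma_prim m k \<alpha> = incl_excl_sum (S_prim m k \<alpha>)"

definition Sigma_sec :: "nat \<Rightarrow> nat \<Rightarrow> real \<Rightarrow> real" where
  "Sigma_sec m k \<alpha> = incl_excl_sum (S_sec m k \<alpha>)"

definition E_unif :: "(real \<Rightarrow> real) \<Rightarrow> real" where
  "E_unif f = integral\<^sup>L (uniform_measure lborel {0..1}) f"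

end

theory Submission
  imports Defs
begin

lemma E_unif_hk:
  fixes f :: "real \<Rightarrow> real"
  assumes f[measurable]: "f \<in> borel_measurable borel"
    and B: "\<And>x. x \<in> {0..1} \<Longrightarrow> \<bar>f x\<bar> \<le> B"
    and I: "(f has_integral I) {0..1}"
  shows "E_unif f = I"
proof -
  have um: "uniform_measure lborel {0..1::real} = density lborel (\<lambda>x. ennreal (indicator {0..1} x))"
    unfolding uniform_measure_def by (simp add: ennreal_indicator divide_ennreal_def)
  interpret finite_measure "uniform_measure lborel {0..1::real}"
    by (rule finite_measureI) (simp add: emeasure_uniform_measure)
  have "integrable (uniform_measure lborel {0..1::real}) f"
  proof (rule integrable_const_bound[of _ B])
    show "AE x in uniform_measure lborel {0..1}. norm (f x) \<le> B"
      by (subst AE_uniform_measure) (auto simp: B)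
  qed simp
  hence int: "integrable lborel (\<lambda>x. indicator {0..1::real} x *\<^sub>R f x)"
    unfolding um by (subst (asm) integrable_density) auto
  have "E_unif f = integral\<^sup>L lborel (\<lambda>x. indicator {0..1::real} x *\<^sub>R f x)"
    unfolding E_unif_def um by (subst integral_density) auto
  also have "\<dots> = integral {0..1} f"
    using set_borel_integral_eq_integral(2)[of "{0..1}" f] int
    unfolding set_integrable_def set_lebesgue_integral_def by simp
  also have "\<dots> = I" using I by (simp add: integral_unique)
  finally show ?thesis .
qed

definition gexp :: "nat \<Rightarrow> nat \<Rightarrow> real \<Rightarrow> real \<Rightarrow> real" where
  "gexp m k \<tau> e = \<tau> * real m powr (e / real k)"

definition bexp :: "nat \<Rightarrow> nat \<Rightarrow> real \<Rightarrow> real" where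
  "bexp m k \<alpha> = real k * log (real m) \<alpha>"

definition emin :: "real \<Rightarrow> real \<Rightarrow> real \<Rightarrow> real" where
  "emin b \<theta> u = min (\<theta> + of_int \<lfloor>u - \<theta>\<rfloor> + 1) (\<theta> + b + of_int \<lfloor>u - \<theta> - b\<rfloor> + 1)"

context
  fixes m k :: nat and \<alpha> \<tau> :: real
  assumes m2: "m \<ge> 2" and k1: "k \<ge> 1" and a1: "1 < \<alpha>"
    and a2: "\<alpha> < real m powr (1 / real k)" and tau: "\<tau> > 0"
begin

lemma M1: "real m > 1" using m2 by simp
lemma K0: "real k > 0" using k1 by simp

lemma alpha_eq: "real m powr (bexp m k \<alpha> / real k) = \<alpha>"
  using M1 K0 a1 by (simp add: bexp_def)

lemma b_pos: "bexp m k \<alpha> > 0"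
  using M1 K0 a1 by (simp add: bexp_def)

lemma b_lt1: "bexp m k \<alpha> < 1"
proof -
  have "log (real m) \<alpha> < log (real m) (real m powr (1 / real k))"
    using M1 a1 a2 by (subst log_less_cancel_iff) auto
  also have "\<dots> = 1 / real k" using M1 by simp
  finally show ?thesis using K0 by (simp add: bexp_def field_simps)
qed

lemma gexp_le_iff: "gexp m k \<tau> e \<le> gexp m k \<tau> e' \<longleftrightarrow> e \<le> e'"
  using M1 K0 tau by (simp add: gexp_def powr_le_cancel_iff divide_le_cancel)

lemma gexp_less_iff: "gexp m k \<tau> e < gexp m k \<tau> e' \<longleftrightarrow> e < e'"
  using gexp_le_iff[of e' e] by linarith

lemma gexp_log: "t > 0 \<Longrightarrow> gexp m k \<tau> (real k * log (real m) (t / \<tau>)) = t"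
  using M1 K0 tau by (simp add: gexp_def)

lemma gexp_add: "gexp m k \<tau> (e + e') = gexp m k \<tau> e * real m powr (e' / real k)"
  by (simp add: gexp_def add_divide_distrib powr_add)

lemma grid_char:
  "shifted_grid m k \<alpha> \<theta> \<tau> = gexp m k \<tau> ` {e. \<exists>p::int. e = \<theta> + p \<or> e = \<theta> + bexp m k \<alpha> + p}"
proof -
  have 1: "real m powr (\<theta> / real k) * (real m powr (real_of_int p / real k) * \<tau>) = gexp m k \<tau> (\<theta> + p)" for p
    by (simp add: gexp_def add_divide_distrib powr_add)
  have 2: "real m powr (\<theta> / real k) * (\<alpha> * real m powr (real_of_int p / real k) * \<tau>)
     = gexp m k \<tau> (\<theta> + bexp m k \<alpha> + p)" for p
    using alpha_eq by (simp add: gexp_def add_divide_distrib powr_add)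
  show ?thesis
    unfolding shifted_grid_def prim_grid_def sec_grid_def
    apply (auto simp: 1 2 image_iff)
    by (metis 1 2)+
qed

lemma int_gt_floor: "real_of_int (p::int) > x \<Longrightarrow> real_of_int p \<ge> of_int \<lfloor>x\<rfloor> + 1"
proof -
  assume "real_of_int p > x"
  hence "\<not> p \<le> \<lfloor>x\<rfloor>" by (simp add: le_floor_iff)
  hence "p \<ge> \<lfloor>x\<rfloor> + 1" by simp
  thus ?thesis by (metis of_int_add of_int_le_iff of_int_1)
qed

lemma next_grid_eq:
  assumes t: "t > 0"
  shows "next_grid m k \<alpha> \<theta> \<tau> t = gexp m k \<tau> (emin (bexp m k \<alpha>) \<theta> (real k * log (real m) (t / \<tau>)))"
proof -
  define u where "u = real k * log (real m) (t / \<tau>)"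
  define b where "b = bexp m k \<alpha>"
  define E where "E = {e. \<exists>p::int. e = \<theta> + p \<or> e = \<theta> + b + p}"
  have tu: "t = gexp m k \<tau> u" using gexp_log[OF t] by (simp add: u_def)
  have f1: "u - \<theta> < of_int \<lfloor>u - \<theta>\<rfloor> + 1" "u - \<theta> - b < of_int \<lfloor>u - \<theta> - b\<rfloor> + 1"
    by (simp_all add: real_of_int_floor_add_one_gt)
  have inE: "emin b \<theta> u \<in> E"
  proof (cases "\<theta> + of_int \<lfloor>u - \<theta>\<rfloor> + 1 \<le> \<theta> + b + of_int \<lfloor>u - \<theta> - b\<rfloor> + 1")
    case True
    then show ?thesis unfolding E_def emin_def
      by (intro CollectI exI[of _ "\<lfloor>u - \<theta>\<rfloor> + 1"]) (simp add: min_def)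
  next
    case False
    then show ?thesis unfolding E_def emin_def
      by (intro CollectI exI[of _ "\<lfloor>u - \<theta> - b\<rfloor> + 1"]) (simp add: min_def)
  qed
  have gt: "emin b \<theta> u > u" using f1 unfolding emin_def by (simp, linarith)
  have least: "emin b \<theta> u \<le> e" if "e \<in> E" "e > u" for e
  proof -
    from that obtain p :: int where "e = \<theta> + p \<or> e = \<theta> + b + p" unfolding E_def by blast
    then show ?thesis
    proof
      assume e: "e = \<theta> + p"
      with that have "real_of_int p > u - \<theta>" by simp
      from int_gt_floor[OF this] show ?thesis unfolding emin_def e by simp
    next
      assume e: "e = \<theta> + b + p"
      with that have "real_of_int p > u - \<theta> - b" by simp
      from int_gt_floor[OF this] show ?thesis unfolding emin_def e by simp
    qed
  qed
  show ?thesis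
    unfolding next_grid_def grid_char b_def[symmetric] E_def[symmetric] u_def[symmetric]
  proof (rule Least_equality)
    show "gexp m k \<tau> (emin b \<theta> u) \<in> gexp m k \<tau> ` E \<and> t < gexp m k \<tau> (emin b \<theta> u)"
      using inE gt by (simp add: tu gexp_less_iff)
    fix y assume "y \<in> gexp m k \<tau> ` E \<and> t < y"
    then obtain e where "e \<in> E" "y = gexp m k \<tau> e" "t < y" by blast
    then show "gexp m k \<tau> (emin b \<theta> u) \<le> y"
      using least by (simp add: tu gexp_less_iff gexp_le_iff)
  qed
qed

end

lemma reflect_has_integral:
  fixes f :: "real \<Rightarrow> real"
  assumes "(f has_integral I) {a..b}"
  shows "((\<lambda>x. f (a + b - x)) has_integral I) {a..b}"
proof -
  have "((\<lambda>x. f ((-1) *\<^sub>R x + (a + b))) has_integral (1 / \<bar>-1\<bar> ^ DIM(real)) *\<^sub>R I)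
        ((\<lambda>x. (1 / -1) *\<^sub>R x + -((1 / -1) *\<^sub>R (a + b))) ` cbox a b)"
    using assms by (intro has_integral_affinity) auto
  moreover have "(\<lambda>x. (1 / -1) *\<^sub>R x + -((1 / -1) *\<^sub>R (a + b))) ` cbox a b = {a..b}"
    by (auto simp: image_iff intro!: bexI[of _ "a + b - x" for x])
  ultimately show ?thesis by simp
qed

definition Dd :: "real \<Rightarrow> real \<Rightarrow> real" where
  "Dd b y = emin b 0 y - y"

lemma Dd_shift: "Dd b (y + of_int n) = Dd b y"
proof -
  have "y + of_int n - b = (y - b) + of_int n" by simp
  hence "\<lfloor>y + of_int n - b\<rfloor> = \<lfloor>y - b\<rfloor> + n" by (simp only: floor_add_int)
  thus ?thesis by (simp add: Dd_def emin_def min_def)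
qed

lemma Dd_bounds: "0 < Dd b y" "Dd b y \<le> 1"
proof -
  have "y < of_int \<lfloor>y\<rfloor> + 1" "y - b < of_int \<lfloor>y - b\<rfloor> + 1" "of_int \<lfloor>y\<rfloor> \<le> y"
    by (simp_all add: real_of_int_floor_add_one_gt)
  then show "0 < Dd b y" "Dd b y \<le> 1" unfolding Dd_def emin_def by (simp_all, linarith+)
qed

lemma exp_integral1:
  fixes c :: real assumes "c \<noteq> 0" "a \<le> e"
  shows "((\<lambda>y. exp (c * (d - y))) has_integral (exp (c * (d - a)) - exp (c * (d - e))) / c) {a..e}"
proof -
  have "((\<lambda>y. exp (c * (d - y))) has_integral ((- exp (c * (d - e)) / c) - (- exp (c * (d - a)) / c))) {a..e}"
  proof (rule fundamental_theorem_of_calculus[OF assms(2)])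
    fix x assume "x \<in> {a..e}"
    show "((\<lambda>y. - exp (c * (d - y)) / c) has_vector_derivative exp (c * (d - x))) (at x within {a..e})"
      unfolding has_real_derivative_iff_has_vector_derivative[symmetric]
      using assms(1) by (auto intro!: derivative_eq_intros)
  qed
  then show ?thesis by (simp add: diff_divide_distrib)
qed

definition Ival :: "real \<Rightarrow> real \<Rightarrow> real" where
  "Ival b c = (exp (c * b) - 1) / c + (exp (c * (1 - b)) - 1) / c"

context
  fixes b c :: real
  assumes b0: "0 < b" and b1: "b < 1" and c0: "c \<noteq> 0"
begin

lemma Dd_low: "0 \<le> y \<Longrightarrow> y < b \<Longrightarrow> Dd b y = b - y"
proof -
  assume y: "0 \<le> y" "y < b"
  have "\<lfloor>y\<rfloor> = 0" using y b1 by (intro floor_unique) auto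
  moreover have "\<lfloor>y - b\<rfloor> = -1" using y b1 by (intro floor_unique) auto
  ultimately show ?thesis using b1 by (simp add: Dd_def emin_def)
qed

lemma Dd_high: "b \<le> y \<Longrightarrow> y < 1 \<Longrightarrow> Dd b y = 1 - y"
proof -
  assume y: "b \<le> y" "y < 1"
  have "\<lfloor>y\<rfloor> = 0" using y b0 by (intro floor_unique) auto
  moreover have "\<lfloor>y - b\<rfloor> = 0" using y b0 by (intro floor_unique) auto
  ultimately show ?thesis using b0 by (simp add: Dd_def emin_def)
qed


lemma phi_int: "((\<lambda>y. exp (c * Dd b y)) has_integral Ival b c) {0..1}"
proof -
  have i1: "((\<lambda>y. exp (c * (b - y))) has_integral (exp (c * b) - 1) / c) {0..b}"
    using exp_integral1[OF c0, of 0 b b] b0 by simp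
  have i1': "((\<lambda>y. exp (c * Dd b y)) has_integral (exp (c * b) - 1) / c) {0..b}"
    by (rule has_integral_spike_finite[of "{b}", OF _ _ i1]) (auto simp: Dd_low)
  have i2: "((\<lambda>y. exp (c * (1 - y))) has_integral (exp (c * (1 - b)) - 1) / c) {b..1}"
    using exp_integral1[OF c0, of b 1 1] b1 by simp
  have i2': "((\<lambda>y. exp (c * Dd b y)) has_integral (exp (c * (1 - b)) - 1) / c) {b..1}"
    by (rule has_integral_spike_finite[of "{1}", OF _ _ i2]) (auto simp: Dd_high)
  show ?thesis unfolding Ival_def
    using has_integral_combine[OF _ _ i1' i2'] b0 b1 by simp
qed

lemma shifted_int: "((\<lambda>\<theta>. exp (c * Dd b (u - \<theta>))) has_integral Ival b c) {0..1}"
proof -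
  define \<phi> where "\<phi> y = exp (c * Dd b y)" for y
  define v where "v = u - of_int \<lfloor>u\<rfloor>"
  have v: "0 \<le> v" "v < 1" unfolding v_def using real_of_int_floor_add_one_gt[of u] of_int_floor_le[of u] by linarith+
  have per: "\<phi> (y + of_int n) = \<phi> y" for y n unfolding \<phi>_def by (simp add: Dd_shift)
  have eq1: "\<phi> (u - \<theta>) = \<phi> (v - \<theta>)" for \<theta>
    using per[of "v - \<theta>" "\<lfloor>u\<rfloor>"] by (simp add: v_def)
  have eq2: "\<phi> (v - \<theta>) = \<phi> (v + 1 - \<theta>)" for \<theta>
    using per[of "v - \<theta>" 1] by (simp add: algebra_simps)
  have I: "(\<phi> has_integral Ival b c) {0..1}" using phi_int unfolding \<phi>_def .
  have int1: "\<phi> integrable_on {0..v}" "\<phi> integrable_on {v..1}"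
    using I v by (auto intro: integrable_subinterval_real has_integral_integrable)
  have sum: "integral {0..v} \<phi> + integral {v..1} \<phi> = Ival b c"
    using Henstock_Kurzweil_Integration.integral_combine[OF v(1) less_imp_le[OF v(2)] has_integral_integrable[OF I]] I
    by (simp add: integral_unique)
  have r1: "((\<lambda>\<theta>. \<phi> (v - \<theta>)) has_integral integral {0..v} \<phi>) {0..v}"
    using reflect_has_integral[OF integrable_integral[OF int1(1)]] by simp
  have r2: "((\<lambda>\<theta>. \<phi> (v - \<theta>)) has_integral integral {v..1} \<phi>) {v..1}"
    using reflect_has_integral[OF integrable_integral[OF int1(2)]] by (simp add: eq2)
  have "((\<lambda>\<theta>. \<phi> (v - \<theta>)) has_integral Ival b c) {0..1}"
    using has_integral_combine[OF v(1) less_imp_le[OF v(2)] r1 r2] sum by simp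
  then show ?thesis unfolding \<phi>_def[symmetric] eq1 .
qed

end

lemma Dd_meas[measurable]: "(\<lambda>\<theta>. Dd b (u - \<theta>)) \<in> borel_measurable borel"
  unfolding Dd_def emin_def by measurable

lemma exp_Dd_bound: "\<bar>exp (c * Dd b y)\<bar> \<le> exp \<bar>c\<bar>"
proof -
  have "c * Dd b y \<le> \<bar>c\<bar>"
    using Dd_bounds[of b y]
  proof (cases "c \<ge> 0")
    case True
    then show ?thesis using Dd_bounds[of b y] mult_left_mono[of "Dd b y" 1 c] by simp
  next
    case False
    then have "c * Dd b y < 0" using Dd_bounds[of b y] by (simp add: mult_neg_pos)
    then show ?thesis by simp
  qed
  thus ?thesis by simp
qed

context
  fixes m k :: nat and \<alpha> \<tau> :: real
  assumes m2: "m \<ge> 2" and k1: "k \<ge> 1" and a1: "1 < \<alpha>"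
    and a2: "\<alpha> < real m powr (1 / real k)" and tau: "\<tau> > 0"
begin

lemma powr_exp: "real m powr (x / real k) = exp (ln (real m) / real k * x)"
  using m2 by (simp add: powr_def)

lemma next_grid_exp:
  assumes t: "t > 0"
  shows "next_grid m k \<alpha> \<theta> \<tau> t
     = t * exp (ln (real m) / real k * Dd (bexp m k \<alpha>) (real k * log (real m) (t / \<tau>) - \<theta>))"
proof -
  define u where "u = real k * log (real m) (t / \<tau>)"
  define b where "b = bexp m k \<alpha>"
  have e: "emin b \<theta> u = u + Dd b (u - \<theta>)"
    unfolding Dd_def emin_def by (simp add: min_def algebra_simps)
  have "next_grid m k \<alpha> \<theta> \<tau> t = gexp m k \<tau> (emin b \<theta> u)"
    using next_grid_eq[OF m2 k1 a1 a2 tau t] by (simp add: u_def b_def)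
  also have "\<dots> = gexp m k \<tau> (u + Dd b (u - \<theta>))" by (simp add: e)
  also have "\<dots> = t * real m powr (Dd b (u - \<theta>) / real k)"
    using gexp_add[OF m2 k1 a1 a2 tau, of u] gexp_log[OF m2 k1 a1 a2 tau t] by (simp add: u_def)
  finally show ?thesis by (simp add: powr_exp u_def b_def)
qed

lemma part12:
  assumes t: "t > 0"
  shows "E_unif (\<lambda>\<theta>. next_grid m k \<alpha> \<theta> \<tau> t)
             = real k / ln (real m) * (\<alpha> + real m powr (1 / real k) / \<alpha> - 2) * t"
    and "E_unif (\<lambda>\<theta>. 1 / next_grid m k \<alpha> \<theta> \<tau> t)
             = real k / ln (real m) * (2 - 1 / \<alpha> - \<alpha> / real m powr (1 / real k)) * (1 / t)"
proof -
  define u where "u = real k * log (real m) (t / \<tau>)"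
  define b where "b = bexp m k \<alpha>"
  define L where "L = ln (real m) / real k"
  have L0: "L > 0" using m2 k1 by (simp add: L_def)
  have lnm: "ln (real m) > 0" using m2 by simp
  have b0: "0 < b" "b < 1" using b_pos[OF m2 k1 a1 a2 tau] b_lt1[OF m2 k1 a1 a2 tau] by (simp_all add: b_def)
  have eb: "exp (L * b) = \<alpha>" using alpha_eq[OF m2 k1 a1 a2 tau] powr_exp[of b]
    by (simp add: L_def b_def mult.commute)
  have r: "real m powr (1 / real k) = exp L" using powr_exp[of 1] by (simp add: L_def)
  have eb1: "exp (L * (1 - b)) = exp L / \<alpha>"
    by (simp add: right_diff_distrib exp_diff eb)
  have NG: "next_grid m k \<alpha> \<theta> \<tau> t = t * exp (L * Dd b (u - \<theta>))" for \<theta>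
    using next_grid_exp[OF t] by (simp add: u_def b_def L_def)
  have NG': "1 / next_grid m k \<alpha> \<theta> \<tau> t = (1 / t) * exp ((- L) * Dd b (u - \<theta>))" for \<theta>
    unfolding NG by (simp add: exp_minus field_simps)
  show "E_unif (\<lambda>\<theta>. next_grid m k \<alpha> \<theta> \<tau> t)
             = real k / ln (real m) * (\<alpha> + real m powr (1 / real k) / \<alpha> - 2) * t"
  proof -
    have "E_unif (\<lambda>\<theta>. next_grid m k \<alpha> \<theta> \<tau> t) = t * Ival b L"
      unfolding NG
    proof (rule E_unif_hk)
      show "\<bar>t * exp (L * Dd b (u - x))\<bar> \<le> t * exp \<bar>L\<bar>" for x
        using exp_Dd_bound[of L b "u - x"] t by (simp add: abs_mult)
      show "((\<lambda>\<theta>. t * exp (L * Dd b (u - \<theta>))) has_integral t * Ival b L) {0..1}"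
        using has_integral_mult_right[OF shifted_int[OF b0 less_imp_neq[OF L0, symmetric]]] .
    qed measurable
    also have "\<dots> = real k / ln (real m) * (\<alpha> + real m powr (1 / real k) / \<alpha> - 2) * t"
      unfolding Ival_def eb eb1 r using L0 lnm by (simp add: L_def field_simps)
    finally show ?thesis .
  qed
  show "E_unif (\<lambda>\<theta>. 1 / next_grid m k \<alpha> \<theta> \<tau> t)
             = real k / ln (real m) * (2 - 1 / \<alpha> - \<alpha> / real m powr (1 / real k)) * (1 / t)"
  proof -
    have "E_unif (\<lambda>\<theta>. 1 / next_grid m k \<alpha> \<theta> \<tau> t) = (1 / t) * Ival b (- L)"
      unfolding NG'
    proof (rule E_unif_hk)
      show "\<bar>(1 / t) * exp ((- L) * Dd b (u - x))\<bar> \<le> (1 / t) * exp \<bar>- L\<bar>" for x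
        using exp_Dd_bound[of "- L" b "u - x"] t by (simp add: abs_mult divide_right_mono)
      show "((\<lambda>\<theta>. (1 / t) * exp ((- L) * Dd b (u - \<theta>))) has_integral (1 / t) * Ival b (- L)) {0..1}"
        using has_integral_mult_right[OF shifted_int[OF b0, of "- L" u], of "1 / t"] L0 by simp
    qed measurable
    also have "\<dots> = real k / ln (real m) * (2 - 1 / \<alpha> - \<alpha> / real m powr (1 / real k)) * (1 / t)"
    proof -
      have e1: "exp (- L * b) = 1 / \<alpha>" using eb by (simp add: exp_minus inverse_eq_divide)
      have e2: "exp (- L * (1 - b)) = \<alpha> / exp L" using eb1 by (simp add: exp_minus inverse_eq_divide)
      have "Ival b (- L) = (1 / \<alpha> - 1) / (- L) + (\<alpha> / exp L - 1) / (- L)"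
        unfolding Ival_def e1 e2 ..
      have kL: "real k / ln (real m) = 1 / L" by (simp add: L_def)
      show ?thesis
        unfolding r kL \<open>Ival b (- L) = _\<close> using L0 a1 t by (simp add: field_simps)
    qed
    finally show ?thesis .
  qed
qed

end

lemma mult_set_char:
  assumes g: "g > 0" and D: "\<Delta> \<ge> 0"
  shows "mult_set g \<Delta> = {z. 0 \<le> z \<and> z \<le> \<Delta> \<and> (\<exists>n::int. z = of_int n * g)}"
proof safe
  fix z assume "z \<in> mult_set g \<Delta>"
  then obtain j :: nat where z: "z = real j * g" "int j \<le> \<lfloor>\<Delta> / g\<rfloor>" unfolding mult_set_def by blast
  have "real j \<le> \<Delta> / g" using z(2) by (metis le_floor_iff of_int_of_nat_eq)
  then show "0 \<le> z" "z \<le> \<Delta>" using g z(1) by (simp_all add: field_simps)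
  show "\<exists>n::int. z = of_int n * g" using z(1) by (intro exI[of _ "int j"]) simp
next
  fix z :: real and n :: int assume "0 \<le> of_int n * g" "of_int n * g \<le> \<Delta>"
  then have n: "n \<ge> 0" "of_int n \<le> \<Delta> / g" using g by (simp_all add: field_simps zero_le_mult_iff)
  then have "n \<le> \<lfloor>\<Delta> / g\<rfloor>" by (simp add: le_floor_iff)
  then show "of_int n * g \<in> mult_set g \<Delta>" unfolding mult_set_def using n
    by (intro CollectI exI[of _ "nat n"]) simp
qed

lemma mult_set_image:
  assumes g: "g > 0" and D: "\<Delta> \<ge> 0"
  shows "mult_set g \<Delta> = (\<lambda>j. real j * g) ` {0..nat \<lfloor>\<Delta> / g\<rfloor>}"
proof -
  have "\<lfloor>\<Delta> / g\<rfloor> \<ge> 0" using g D by simp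
  then show ?thesis unfolding mult_set_def by (auto simp: image_iff le_nat_iff)
qed

lemma finite_mult_set: "g > 0 \<Longrightarrow> \<Delta> \<ge> 0 \<Longrightarrow> finite (mult_set g \<Delta>)"
  by (simp add: mult_set_image)

lemma card_mult_set:
  assumes g: "g > 0" and D: "\<Delta> \<ge> 0"
  shows "real (card (mult_set g \<Delta>)) = of_int \<lfloor>\<Delta> / g\<rfloor> + 1"
proof -
  have "inj_on (\<lambda>j. real j * g) {0..nat \<lfloor>\<Delta> / g\<rfloor>}" using g by (auto simp: inj_on_def)
  then have "card (mult_set g \<Delta>) = nat \<lfloor>\<Delta> / g\<rfloor> + 1"
    by (simp add: mult_set_image[OF g D] card_image)
  moreover have "\<lfloor>\<Delta> / g\<rfloor> \<ge> 0" using g D by simp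
  ultimately show ?thesis by simp
qed

lemma mult_set_mono:
  assumes g: "g > 0" and D: "\<Delta> \<ge> 0" and n: "n \<ge> 1"
  shows "mult_set (real n * g) \<Delta> \<subseteq> mult_set g \<Delta>"
proof -
  have "real n * g > 0" using g n by simp
  from mult_set_char[OF this D] show ?thesis
    unfolding mult_set_char[OF g D] by (auto intro!: exI[of _ "_ * int n"])
qed

lemma lim_card_mult_set:
  assumes g: "g > 0"
  shows "((\<lambda>\<Delta>. real (card (mult_set g \<Delta>)) / \<Delta>) \<longlongrightarrow> 1 / g) at_top"
proof (rule tendsto_sandwich[of "\<lambda>_. 1 / g" _ _ "\<lambda>\<Delta>. 1 / g + inverse \<Delta>"])
  show "\<forall>\<^sub>F \<Delta> in at_top. 1 / g \<le> real (card (mult_set g \<Delta>)) / \<Delta>"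
    using eventually_gt_at_top[of 0]
  proof eventually_elim
    case (elim \<Delta>)
    have "\<Delta> / g \<le> of_int \<lfloor>\<Delta> / g\<rfloor> + 1" by linarith
    then show ?case using elim g by (simp add: card_mult_set field_simps)
  qed
  show "\<forall>\<^sub>F \<Delta> in at_top. real (card (mult_set g \<Delta>)) / \<Delta> \<le> 1 / g + inverse \<Delta>"
    using eventually_gt_at_top[of 0]
  proof eventually_elim
    case (elim \<Delta>)
    have "of_int \<lfloor>\<Delta> / g\<rfloor> \<le> \<Delta> / g" by linarith
    then have "g * of_int \<lfloor>\<Delta> / g\<rfloor> \<le> g * (\<Delta> / g)" using g by (intro mult_left_mono) auto
    then show ?case using elim g by (simp add: card_mult_set field_simps)
  qed
  show "((\<lambda>\<Delta>. 1 / g + inverse \<Delta>) \<longlongrightarrow> 1 / g) at_top"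
    using tendsto_add[OF tendsto_const tendsto_inverse_0_at_top[OF filterlim_ident]] by simp
qed simp

definition CMul :: "real set \<Rightarrow> real \<Rightarrow> bool" where
  "CMul N z \<longleftrightarrow> (\<forall>x\<in>N. \<exists>n::int. z = of_int n * x)"

lemma CMul_diff: "CMul N z \<Longrightarrow> CMul N w \<Longrightarrow> CMul N (z - of_int j * w)"
  unfolding CMul_def
proof
  fix x assume "\<forall>x\<in>N. \<exists>n::int. z = of_int n * x" "\<forall>x\<in>N. \<exists>n::int. w = of_int n * x" "x \<in> N"
  then obtain n n' :: int where "z = of_int n * x" "w = of_int n' * x" by blast
  then show "\<exists>n::int. z - of_int j * w = of_int n * x"
    by (intro exI[of _ "n - j * n'"]) (simp add: algebra_simps)
qed

lemma rcm_iff: "real_common_multiple N L \<longleftrightarrow> L > 0 \<and> CMul N L"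
  unfolding real_common_multiple_def CMul_def by auto

lemma LCM_exists:
  assumes N: "x0 \<in> N" "x0 > 0" and ex: "\<exists>L. real_common_multiple N L"
  obtains L0 where "real_common_multiple N L0" "real_LCM N = ereal L0"
    "\<And>z. CMul N z \<longleftrightarrow> (\<exists>j::int. z = of_int j * L0)"
proof -
  define S where "S = {n::nat. real_common_multiple N (real n * x0)}"
  have intmult: "\<exists>n::nat. L = real n * x0 \<and> n \<in> S" if "real_common_multiple N L" for L
  proof -
    from that N obtain n :: int where n: "L = of_int n * x0" "L > 0"
      unfolding real_common_multiple_def by blast
    then have "n > 0" using N by (simp add: zero_less_mult_iff)
    then have "L = real (nat n) * x0" using n by simp
    then show ?thesis using that by (auto simp: S_def)
  qed
  from ex obtain L1 where "real_common_multiple N L1" by blast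
  from intmult[OF this] have "S \<noteq> {}" by blast
  define n0 where "n0 = (LEAST n. n \<in> S)"
  have n0S: "n0 \<in> S" unfolding n0_def using \<open>S \<noteq> {}\<close> by (auto intro: LeastI)
  define L0 where "L0 = real n0 * x0"
  have rcm0: "real_common_multiple N L0" using n0S by (simp add: S_def L0_def)
  have minimal: "L0 \<le> L" if "real_common_multiple N L" for L
  proof -
    from intmult[OF that] obtain n where "L = real n * x0" "n \<in> S" by blast
    then have "n0 \<le> n" unfolding n0_def by (simp add: Least_le)
    then show ?thesis using N \<open>L = real n * x0\<close> by (simp add: L0_def mult_right_mono)
  qed
  have least: "(LEAST L. real_common_multiple N L) = L0"
    by (rule Least_equality) (use rcm0 minimal in auto)
  have "real_LCM N = ereal L0" unfolding real_LCM_def using ex least by simp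
  moreover have "CMul N z \<longleftrightarrow> (\<exists>j::int. z = of_int j * L0)" for z
  proof
    assume cz: "CMul N z"
    have L0p: "L0 > 0" and c0: "CMul N L0" using rcm0 by (simp_all add: rcm_iff)
    define w where "w = z - of_int \<lfloor>z / L0\<rfloor> * L0"
    have cw: "CMul N w" unfolding w_def by (rule CMul_diff[OF cz c0])
    have "of_int \<lfloor>z / L0\<rfloor> \<le> z / L0" "z / L0 < of_int \<lfloor>z / L0\<rfloor> + 1" by linarith+
    then have "of_int \<lfloor>z / L0\<rfloor> * L0 \<le> z / L0 * L0" "z / L0 * L0 < (of_int \<lfloor>z / L0\<rfloor> + 1) * L0"
      using L0p by (intro mult_right_mono mult_strict_right_mono; simp)+
    then have w: "0 \<le> w" "w < L0" using L0p unfolding w_def by (simp_all add: algebra_simps)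
    have "w = 0"
    proof (rule ccontr)
      assume "w \<noteq> 0"
      then have "real_common_multiple N w" using w cw by (simp add: rcm_iff)
      from minimal[OF this] w show False by simp
    qed
    then show "\<exists>j::int. z = of_int j * L0" unfolding w_def by (intro exI[of _ "\<lfloor>z / L0\<rfloor>"]) simp
  next
    assume "\<exists>j::int. z = of_int j * L0"
    then obtain j :: int where "z = of_int j * L0" by blast
    moreover have "CMul N L0" using rcm0 by (simp add: rcm_iff)
    ultimately show "CMul N z" unfolding CMul_def
      by (metis mult.assoc of_int_mult)
  qed
  ultimately show ?thesis using that rcm0 by blast
qed

lemma inter_mult_set:
  assumes N: "N \<noteq> {}" "\<forall>x\<in>N. x > 0" and c: "c > 0" and D: "\<Delta> \<ge> 0"
  shows "(\<Inter>x\<in>N. mult_set (c * x) \<Delta>) = {z. 0 \<le> z \<and> z \<le> \<Delta> \<and> CMul N (z / c)}"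
proof -
  have "(\<Inter>x\<in>N. mult_set (c * x) \<Delta>) = (\<Inter>x\<in>N. {z. 0 \<le> z \<and> z \<le> \<Delta> \<and> (\<exists>n::int. z = of_int n * (c * x))})"
    using N c D by (intro INF_cong refl mult_set_char) auto
  also have "\<dots> = {z. 0 \<le> z \<and> z \<le> \<Delta> \<and> CMul N (z / c)}"
  proof -
    have "(\<exists>n::int. z = of_int n * (c * x)) \<longleftrightarrow> (\<exists>n::int. z / c = of_int n * x)" for z x
      using c by (auto simp: field_simps)
    then show ?thesis using N unfolding CMul_def by auto
  qed
  finally show ?thesis .
qed

lemma inter_mult_set_lim:
  assumes N: "N \<noteq> {}" "\<forall>x\<in>N. x > 0" and c: "c > 0"
  shows "((\<lambda>\<Delta>. real (card (\<Inter>x\<in>N. mult_set (c * x) \<Delta>)) / \<Delta>) \<longlongrightarrow> inv_LCM N / c) at_top"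
proof (cases "\<exists>L. real_common_multiple N L")
  case False
  have "real_LCM N = \<infinity>" unfolding real_LCM_def by (rule if_not_P[OF False])
  then have "inv_LCM N = 0" unfolding inv_LCM_def by simp
  have eq: "(\<Inter>x\<in>N. mult_set (c * x) \<Delta>) = {0}" if D: "\<Delta> \<ge> 0" for \<Delta>
  proof -
    have "z = 0" if "0 \<le> z" "CMul N (z / c)" for z
    proof (rule ccontr)
      assume "z \<noteq> 0"
      then have "real_common_multiple N (z / c)" using that c by (simp add: rcm_iff)
      with False show False by blast
    qed
    moreover have "CMul N 0" unfolding CMul_def by (auto intro: exI[of _ 0])
    ultimately show ?thesis unfolding inter_mult_set[OF N c D] using D by auto
  qed
  have "((\<lambda>\<Delta>::real. 1 / \<Delta>) \<longlongrightarrow> 0) at_top"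
    using tendsto_inverse_0_at_top[OF filterlim_ident] by (simp add: inverse_eq_divide)
  moreover have "\<forall>\<^sub>F \<Delta> in at_top. 1 / \<Delta> = real (card (\<Inter>x\<in>N. mult_set (c * x) \<Delta>)) / \<Delta>"
    using eventually_ge_at_top[of "0::real"] by eventually_elim (simp add: eq)
  ultimately show ?thesis
    using \<open>inv_LCM N = 0\<close> Lim_transform_eventually by fastforce
next
  case True
  from N obtain x0 where x0: "x0 \<in> N" "x0 > 0" by auto
  obtain L0 where L0: "real_common_multiple N L0" "real_LCM N = ereal L0"
    "\<And>z. CMul N z \<longleftrightarrow> (\<exists>j::int. z = of_int j * L0)"
    using LCM_exists[OF x0 True] by blast
  have L0p: "L0 > 0" using L0(1) by (simp add: rcm_iff)
  have inv: "inv_LCM N = 1 / L0" unfolding inv_LCM_def L0(2) by simp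
  have eq: "(\<Inter>x\<in>N. mult_set (c * x) \<Delta>) = mult_set (c * L0) \<Delta>" if D: "\<Delta> \<ge> 0" for \<Delta>
  proof -
    have "CMul N (z / c) \<longleftrightarrow> (\<exists>j::int. z = of_int j * (c * L0))" for z
      unfolding L0(3) using c by (auto simp: field_simps)
    then show ?thesis unfolding inter_mult_set[OF N c D] mult_set_char[OF mult_pos_pos[OF c L0p] D] by auto
  qed
  have "((\<lambda>\<Delta>. real (card (mult_set (c * L0) \<Delta>)) / \<Delta>) \<longlongrightarrow> 1 / (c * L0)) at_top"
    by (rule lim_card_mult_set) (use c L0p in simp)
  moreover have "\<forall>\<^sub>F \<Delta> in at_top. real (card (mult_set (c * L0) \<Delta>)) / \<Delta> = real (card (\<Inter>x\<in>N. mult_set (c * x) \<Delta>)) / \<Delta>"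
    using eventually_ge_at_top[of "0::real"] by eventually_elim (simp add: eq)
  moreover have "1 / (c * L0) = inv_LCM N / c" unfolding inv by simp
  ultimately show ?thesis
    using Lim_transform_eventually by fastforce
qed

context
  fixes m k :: nat and \<alpha> \<tau> :: real
  assumes m2: "m \<ge> 2" and k1: "k \<ge> 1" and a1: "1 < \<alpha>"
    and a2: "\<alpha> < real m powr (1 / real k)" and tau: "\<tau> > 0"
begin

lemma gexp_pos: "gexp m k \<tau> e > 0"
  using tau m2 by (simp add: gexp_def)

lemma gexp_q: "gexp m k \<tau> (e + real k * real q) = real (m ^ q) * gexp m k \<tau> e"
proof -
  have "gexp m k \<tau> (e + real k * real q) = gexp m k \<tau> e * real m powr (real k * real q / real k)"
    by (rule gexp_add[OF m2 k1 a1 a2 tau])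
  also have "real m powr (real k * real q / real k) = real m ^ q"
    using k1 m2 by (simp add: powr_realpow)
  finally show ?thesis by simp
qed

lemma nat_split_k: "real (d::nat) = real (d mod k) + real k * real (d div k)"
proof -
  have "d = d mod k + k * (d div k)" by simp
  then show ?thesis by (metis of_nat_add of_nat_mult)
qed

lemma alpha_powr: "\<alpha> * real m powr (y / real k) = real m powr ((bexp m k \<alpha> + y) / real k)"
  using alpha_eq[OF m2 k1 a1 a2 tau] by (simp add: add_divide_distrib powr_add)

lemma inv_alpha_powr: "1 / \<alpha> * real m powr (y / real k) = real m powr ((y - bexp m k \<alpha>) / real k)"
  using alpha_eq[OF m2 k1 a1 a2 tau] by (simp add: diff_divide_distrib powr_diff)

lemma union_lemma:
  fixes E :: "real set" and S :: "real set" and e0 :: real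
  assumes grid: "shifted_grid m k \<alpha> \<theta> \<tau> = gexp m k \<tau> ` E"
    and D: "\<Delta> \<ge> 0"
    and hA: "\<And>x. x \<in> S \<Longrightarrow> \<exists>y \<ge> 0. x = real m powr (y / real k) \<and> e0 + y \<in> E"
    and hB: "\<And>e. e \<in> E \<Longrightarrow> e \<ge> e0 \<Longrightarrow> \<exists>y q. real m powr (y / real k) \<in> S \<and> e = e0 + y + real k * real q"
  shows "(\<Union>g \<in> shifted_grid m k \<alpha> \<theta> \<tau> \<inter> {gexp m k \<tau> e0..}. mult_set g \<Delta>)
       = (\<Union>x\<in>S. mult_set (gexp m k \<tau> e0 * x) \<Delta>)"
proof -
  have ge: "gexp m k \<tau> e0 * real m powr (y / real k) = gexp m k \<tau> (e0 + y)" for y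
    using gexp_add[OF m2 k1 a1 a2 tau] by simp
  show ?thesis
  proof (rule antisym)
    show "(\<Union>x\<in>S. mult_set (gexp m k \<tau> e0 * x) \<Delta>) \<subseteq> (\<Union>g \<in> shifted_grid m k \<alpha> \<theta> \<tau> \<inter> {gexp m k \<tau> e0..}. mult_set g \<Delta>)"
    proof (rule UN_least)
      fix x assume "x \<in> S"
      from hA[OF this] obtain y where y: "y \<ge> 0" "x = real m powr (y / real k)" "e0 + y \<in> E" by blast
      have "gexp m k \<tau> e0 * x \<in> shifted_grid m k \<alpha> \<theta> \<tau> \<inter> {gexp m k \<tau> e0..}"
        unfolding grid y(2) ge using y(1,3) by (auto simp: gexp_le_iff[OF m2 k1 a1 a2 tau])
      then show "mult_set (gexp m k \<tau> e0 * x) \<Delta> \<subseteq> (\<Union>g \<in> shifted_grid m k \<alpha> \<theta> \<tau> \<inter> {gexp m k \<tau> e0..}. mult_set g \<Delta>)"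
        by blast
    qed
  next
    show "(\<Union>g \<in> shifted_grid m k \<alpha> \<theta> \<tau> \<inter> {gexp m k \<tau> e0..}. mult_set g \<Delta>) \<subseteq> (\<Union>x\<in>S. mult_set (gexp m k \<tau> e0 * x) \<Delta>)"
    proof (rule UN_least)
      fix g assume "g \<in> shifted_grid m k \<alpha> \<theta> \<tau> \<inter> {gexp m k \<tau> e0..}"
      then obtain e where e: "e \<in> E" "g = gexp m k \<tau> e" "gexp m k \<tau> e0 \<le> g" unfolding grid by auto
      then have "e \<ge> e0" by (simp add: gexp_le_iff[OF m2 k1 a1 a2 tau])
      from hB[OF e(1) this] obtain y q where yq: "real m powr (y / real k) \<in> S" "e = e0 + y + real k * real q" by blast
      have "g = real (m ^ q) * (gexp m k \<tau> e0 * real m powr (y / real k))"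
        unfolding e(2) yq(2) gexp_q ge ..
      moreover have "mult_set (real (m ^ q) * (gexp m k \<tau> e0 * real m powr (y / real k))) \<Delta>
          \<subseteq> mult_set (gexp m k \<tau> e0 * real m powr (y / real k)) \<Delta>"
        by (rule mult_set_mono) (use gexp_pos m2 D in auto)
      ultimately show "mult_set g \<Delta> \<subseteq> (\<Union>x\<in>S. mult_set (gexp m k \<tau> e0 * x) \<Delta>)"
        using yq(1) by blast
    qed
  qed
qed

lemma Sprim_mem: "j < k \<Longrightarrow> real m powr (real j / real k) \<in> S_prim m k \<alpha>"
    "j < k \<Longrightarrow> \<alpha> * real m powr (real j / real k) \<in> S_prim m k \<alpha>"
  unfolding S_prim_def by (auto intro!: image_eqI[where x="Suc j"])

lemma Ssec_mem: "j < k \<Longrightarrow> real m powr (real j / real k) \<in> S_sec m k \<alpha>"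
    "j < k \<Longrightarrow> 1 / \<alpha> * real m powr (real (Suc j) / real k) \<in> S_sec m k \<alpha>"
  unfolding S_sec_def by (auto intro!: image_eqI[where x="Suc j"])

lemma Sprim_cases: "x \<in> S_prim m k \<alpha> \<Longrightarrow>
   \<exists>j<k. x = real m powr (real j / real k) \<or> x = \<alpha> * real m powr (real j / real k)"
proof -
  assume "x \<in> S_prim m k \<alpha>"
  then obtain \<kappa> where "\<kappa> \<in> {1..k}" "x = real m powr ((real \<kappa> - 1) / real k) \<or> x = \<alpha> * real m powr ((real \<kappa> - 1) / real k)"
    unfolding S_prim_def by blast
  then show ?thesis by (intro exI[of _ "\<kappa> - 1"]) (auto simp: of_nat_diff)
qed

lemma Ssec_cases: "x \<in> S_sec m k \<alpha> \<Longrightarrow>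
   \<exists>j<k. x = real m powr (real j / real k) \<or> x = 1 / \<alpha> * real m powr (real (Suc j) / real k)"
proof -
  assume "x \<in> S_sec m k \<alpha>"
  then obtain \<kappa> where "\<kappa> \<in> {1..k}" "x = real m powr ((real \<kappa> - 1) / real k) \<or> x = 1 / \<alpha> * real m powr (real \<kappa> / real k)"
    unfolding S_sec_def by blast
  then show ?thesis by (intro exI[of _ "\<kappa> - 1"]) (auto simp: of_nat_diff)
qed

lemma int_ge_from_real: "real_of_int p0 < real_of_int p + 1 \<Longrightarrow> p0 \<le> p"
proof -
  assume "real_of_int p0 < real_of_int p + 1"
  then have "real_of_int p0 < real_of_int (p + 1)" by simp
  then have "p0 < p + 1" using of_int_less_iff by blast
  then show ?thesis by linarith
qed

lemma density_eq:
  fixes \<theta> :: real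
  defines "b \<equiv> bexp m k \<alpha>"
  defines "P \<equiv> \<theta> + of_int \<lfloor>- \<theta>\<rfloor> + 1" and "Q \<equiv> \<theta> + b + of_int \<lfloor>- \<theta> - b\<rfloor> + 1"
  shows "density_coeff m k \<alpha> \<theta> \<tau> =
     (if P \<le> Q then Sigma_prim m k \<alpha> else Sigma_sec m k \<alpha>) / gexp m k \<tau> (min P Q)"
proof -
  define E where "E = {e. \<exists>p::int. e = \<theta> + p \<or> e = \<theta> + b + p}"
  define S where "S = (if P \<le> Q then S_prim m k \<alpha> else S_sec m k \<alpha>)"
  define e0 where "e0 = min P Q"
  define g0 where "g0 = gexp m k \<tau> e0"
  have b0: "0 < b" "b < 1" using b_pos[OF m2 k1 a1 a2 tau] b_lt1[OF m2 k1 a1 a2 tau] by (simp_all add: b_def)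
  have K0: "real k > 0" using k1 by simp
  have g0pos: "g0 > 0" unfolding g0_def by (rule gexp_pos)
  have ng: "next_grid m k \<alpha> \<theta> \<tau> \<tau> = g0"
    using next_grid_eq[OF m2 k1 a1 a2 tau tau, of \<theta>] tau
    by (simp add: g0_def e0_def emin_def P_def Q_def b_def)
  have grid: "shifted_grid m k \<alpha> \<theta> \<tau> = gexp m k \<tau> ` E"
    unfolding E_def b_def by (rule grid_char[OF m2 k1 a1 a2 tau])
  have Sfin: "finite S" unfolding S_def S_prim_def S_sec_def by auto
  have Spos: "\<forall>x\<in>S. x > 0" unfolding S_def S_prim_def S_sec_def using a1 m2 by auto
  have hA: "\<exists>y \<ge> 0. x = real m powr (y / real k) \<and> e0 + y \<in> E" if "x \<in> S" for x
  proof (cases "P \<le> Q")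
    case True
    then have e0: "e0 = \<theta> + of_int (\<lfloor>- \<theta>\<rfloor> + 1)" by (simp add: e0_def P_def)
    from that True obtain j where j: "j < k" "x = real m powr (real j / real k) \<or> x = \<alpha> * real m powr (real j / real k)"
      unfolding S_def using Sprim_cases by auto
    from j(2) show ?thesis
    proof
      assume "x = real m powr (real j / real k)"
      then show ?thesis unfolding E_def e0
        by (intro exI[of _ "real j"]) (auto intro!: exI[of _ "\<lfloor>- \<theta>\<rfloor> + 1 + int j"])
    next
      assume "x = \<alpha> * real m powr (real j / real k)"
      then have x: "x = real m powr ((b + real j) / real k)" by (simp add: alpha_powr b_def)
      show ?thesis unfolding E_def e0 x using b0
        by (intro exI[of _ "b + real j"]) (auto intro!: exI[of _ "\<lfloor>- \<theta>\<rfloor> + 1 + int j"])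
    qed
  next
    case False
    then have e0: "e0 = \<theta> + b + of_int (\<lfloor>- \<theta> - b\<rfloor> + 1)" by (simp add: e0_def Q_def)
    from that False obtain j where j: "j < k" "x = real m powr (real j / real k) \<or> x = 1 / \<alpha> * real m powr (real (Suc j) / real k)"
      unfolding S_def using Ssec_cases by auto
    from j(2) show ?thesis
    proof
      assume "x = real m powr (real j / real k)"
      then show ?thesis unfolding E_def e0
        by (intro exI[of _ "real j"]) (auto intro!: exI[of _ "\<lfloor>- \<theta> - b\<rfloor> + 1 + int j"])
    next
      assume "x = 1 / \<alpha> * real m powr (real (Suc j) / real k)"
      then have x: "x = real m powr ((real (Suc j) - b) / real k)"
        using inv_alpha_powr[of "real (Suc j)"] by (simp add: b_def)
      show ?thesis unfolding E_def e0 x using b0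
        by (intro exI[of _ "real (Suc j) - b"]) (auto intro!: exI[of _ "\<lfloor>- \<theta> - b\<rfloor> + 1 + int (Suc j)"])
    qed
  qed
  have hB: "\<exists>y q. real m powr (y / real k) \<in> S \<and> e = e0 + y + real k * real q" if "e \<in> E" "e \<ge> e0" for e
  proof -
    from that(1) obtain p :: int where p: "e = \<theta> + p \<or> e = \<theta> + b + p" unfolding E_def by blast
    have modk: "d mod k < k" for d using k1 by simp
    show ?thesis
    proof (cases "P \<le> Q")
      case True
      define p0 where "p0 = \<lfloor>- \<theta>\<rfloor> + 1"
      have e0: "e0 = \<theta> + of_int p0" using True by (simp add: e0_def P_def p0_def)
      have SS: "S = S_prim m k \<alpha>" using True by (simp add: S_def)
      from p show ?thesis
      proof
        assume ep: "e = \<theta> + p"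
        then have "p0 \<le> p" using that(2) e0 by (intro int_ge_from_real) simp
        define dn where "dn = nat (p - p0)"
        have "e = e0 + real dn" unfolding dn_def ep e0 using \<open>p0 \<le> p\<close> by simp
        then have "e = e0 + real (dn mod k) + real k * real (dn div k)" using nat_split_k[of dn] by simp
        then show ?thesis unfolding SS using Sprim_mem(1)[OF modk[of dn]] by blast
      next
        assume ep: "e = \<theta> + b + p"
        then have "p0 \<le> p" using that(2) e0 b0 by (intro int_ge_from_real) simp
        define dn where "dn = nat (p - p0)"
        have "e = e0 + b + real dn" unfolding dn_def ep e0 using \<open>p0 \<le> p\<close> by simp
        then have "e = e0 + (b + real (dn mod k)) + real k * real (dn div k)" using nat_split_k[of dn] by simp
        moreover have "real m powr ((b + real (dn mod k)) / real k) \<in> S"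
          unfolding SS b_def alpha_powr[symmetric] using Sprim_mem(2)[OF modk[of dn]] .
        ultimately show ?thesis by blast
      qed
    next
      case False
      define q0 where "q0 = \<lfloor>- \<theta> - b\<rfloor> + 1"
      have e0: "e0 = \<theta> + b + of_int q0" using False by (simp add: e0_def Q_def q0_def)
      have SS: "S = S_sec m k \<alpha>" using False by (simp add: S_def)
      from p show ?thesis
      proof
        assume ep: "e = \<theta> + p"
        then have "q0 + 1 \<le> p" using that(2) e0 b0 by (intro int_ge_from_real) simp
        define dn where "dn = nat (p - q0 - 1)"
        have "e = e0 + (1 - b) + real dn" unfolding dn_def ep e0 using \<open>q0 + 1 \<le> p\<close> by simp
        then have "e = e0 + (real (Suc (dn mod k)) - b) + real k * real (dn div k)" using nat_split_k[of dn] by simp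
        moreover have "real m powr ((real (Suc (dn mod k)) - b) / real k) \<in> S"
          unfolding SS b_def inv_alpha_powr[symmetric] using Ssec_mem(2)[OF modk[of dn]] .
        ultimately show ?thesis by blast
      next
        assume ep: "e = \<theta> + b + p"
        then have "q0 \<le> p" using that(2) e0 by (intro int_ge_from_real) simp
        define dn where "dn = nat (p - q0)"
        have "e = e0 + real dn" unfolding dn_def ep e0 using \<open>q0 \<le> p\<close> by simp
        then have "e = e0 + real (dn mod k) + real k * real (dn div k)" using nat_split_k[of dn] by simp
        then show ?thesis unfolding SS using Ssec_mem(1)[OF modk[of dn]] by blast
      qed
    qed
  qed
  have U: "(\<Union>g \<in> shifted_grid m k \<alpha> \<theta> \<tau> \<inter> {next_grid m k \<alpha> \<theta> \<tau> \<tau>..}. mult_set g \<Delta>)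
       = (\<Union>x\<in>S. mult_set (g0 * x) \<Delta>)" if D: "\<Delta> \<ge> 0" for \<Delta>
    unfolding ng g0_def by (rule union_lemma[OF grid D hA hB])
  define F where "F = {B. B \<subseteq> S \<and> B \<noteq> {}}"
  have IE: "real (card (\<Union>x\<in>S. mult_set (g0 * x) \<Delta>)) =
     (\<Sum>B\<in>F. (-1) ^ (card B + 1) * real (card (\<Inter>x\<in>B. mult_set (g0 * x) \<Delta>)))" if D: "\<Delta> \<ge> 0" for \<Delta>
  proof -
    interpret Incl_Excl finite "int o card" proof qed (auto simp add: card_Un_disjnt)
    have "int (card (\<Union>x\<in>S. mult_set (g0 * x) \<Delta>)) =
       (\<Sum>B | B \<subseteq> S \<and> B \<noteq> {}. (-1) ^ (card B + 1) * int (card (\<Inter>x\<in>B. mult_set (g0 * x) \<Delta>)))"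
      using restricted_indexed[of S "\<lambda>x. mult_set (g0 * x) \<Delta>"] Sfin Spos finite_mult_set g0pos D by simp
    from arg_cong[OF this, of real_of_int] show ?thesis unfolding F_def by simp
  qed
  have lim: "((\<lambda>\<Delta>. \<Sum>B\<in>F. (-1) ^ (card B + 1) * (real (card (\<Inter>x\<in>B. mult_set (g0 * x) \<Delta>)) / \<Delta>))
      \<longlongrightarrow> (\<Sum>B\<in>F. (-1) ^ (card B + 1) * (inv_LCM B / g0))) at_top"
    by (intro tendsto_sum tendsto_mult_left inter_mult_set_lim) (use Spos g0pos in \<open>auto simp: F_def\<close>)
  have ev: "\<forall>\<^sub>F \<Delta> in at_top. (\<Sum>B\<in>F. (-1) ^ (card B + 1) * (real (card (\<Inter>x\<in>B. mult_set (g0 * x) \<Delta>)) / \<Delta>))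
     = real (card (\<Union>g \<in> shifted_grid m k \<alpha> \<theta> \<tau> \<inter> {next_grid m k \<alpha> \<theta> \<tau> \<tau>..}. mult_set g \<Delta>)) / \<Delta>"
    using eventually_ge_at_top[of "0::real"]
  proof eventually_elim
    case (elim \<Delta>)
    show ?case unfolding U[OF elim] IE[OF elim] sum_divide_distrib by simp
  qed
  have "density_coeff m k \<alpha> \<theta> \<tau> = (\<Sum>B\<in>F. (-1) ^ (card B + 1) * (inv_LCM B / g0))"
    unfolding density_coeff_def
    by (rule tendsto_Lim[OF trivial_limit_at_top_linorder Lim_transform_eventually[OF lim ev]])
  also have "\<dots> = incl_excl_sum S / g0"
    unfolding incl_excl_sum_def F_def sum_divide_distrib by simp
  finally show ?thesis unfolding S_def g0_def e0_def Sigma_prim_def Sigma_sec_def by simp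
qed

end

context
  fixes m k :: nat and \<alpha> \<tau> :: real
  assumes m2: "m \<ge> 2" and k1: "k \<ge> 1" and a1: "1 < \<alpha>"
    and a2: "\<alpha> < real m powr (1 / real k)" and tau: "\<tau> > 0"
begin

lemma part3:
  "E_unif (\<lambda>\<theta>. density_coeff m k \<alpha> \<theta> \<tau>)
     = real k / ln (real m)
       * ((1 - \<alpha> / real m powr (1 / real k)) * Sigma_prim m k \<alpha>
          + (1 - 1 / \<alpha>) * Sigma_sec m k \<alpha>) * (1 / \<tau>)"
proof -
  define b where "b = bexp m k \<alpha>"
  define L where "L = ln (real m) / real k"
  define Sp where "Sp = Sigma_prim m k \<alpha>"
  define Ss where "Ss = Sigma_sec m k \<alpha>"
  define P where "P \<theta> = \<theta> + of_int \<lfloor>- \<theta>\<rfloor> + 1" for \<theta> :: real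
  define Q where "Q \<theta> = \<theta> + b + of_int \<lfloor>- \<theta> - b\<rfloor> + 1" for \<theta> :: real
  define f where "f \<theta> = (if P \<theta> \<le> Q \<theta> then Sp else Ss) / gexp m k \<tau> (min (P \<theta>) (Q \<theta>))" for \<theta>
  have L0: "L > 0" using m2 k1 by (simp add: L_def)
  have lnm: "ln (real m) > 0" using m2 by simp
  have b0: "0 < b" "b < 1" using b_pos[OF m2 k1 a1 a2 tau] b_lt1[OF m2 k1 a1 a2 tau] by (simp_all add: b_def)
  have eb: "exp (L * b) = \<alpha>" using alpha_eq[OF m2 k1 a1 a2 tau] powr_exp[OF m2 k1 a1 a2 tau, of b]
    by (simp add: L_def b_def mult.commute)
  have r: "real m powr (1 / real k) = exp L" using powr_exp[OF m2 k1 a1 a2 tau, of 1] by (simp add: L_def)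
  have gx: "gexp m k \<tau> e = \<tau> * exp (L * e)" for e
    unfolding gexp_def powr_exp[OF m2 k1 a1 a2 tau] L_def by simp
  have fd: "(\<lambda>\<theta>. density_coeff m k \<alpha> \<theta> \<tau>) = f"
    by (rule ext) (simp add: density_eq[OF m2 k1 a1 a2 tau] f_def P_def Q_def b_def Sp_def Ss_def)
  have fmeas: "f \<in> borel_measurable borel"
    unfolding f_def P_def Q_def gexp_def by measurable
  have Ppos: "P \<theta> > 0" "Q \<theta> > 0" for \<theta>
    unfolding P_def Q_def using real_of_int_floor_add_one_gt[of "- \<theta>"] real_of_int_floor_add_one_gt[of "- \<theta> - b"] by linarith+
  have fbound: "\<bar>f \<theta>\<bar> \<le> (\<bar>Sp\<bar> + \<bar>Ss\<bar>) / \<tau>" for \<theta>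
  proof -
    define g where "g = gexp m k \<tau> (min (P \<theta>) (Q \<theta>))"
    have "gexp m k \<tau> 0 \<le> g" unfolding g_def gexp_le_iff[OF m2 k1 a1 a2 tau] using Ppos[of \<theta>] by simp
    then have g: "\<tau> \<le> g" using m2 by (simp add: gexp_def)
    have "\<bar>f \<theta>\<bar> = \<bar>if P \<theta> \<le> Q \<theta> then Sp else Ss\<bar> / g" unfolding f_def g_def[symmetric] using tau g by (simp add: abs_divide)
    also have "\<dots> \<le> (\<bar>Sp\<bar> + \<bar>Ss\<bar>) / g" by (intro divide_right_mono) (use tau g in auto)
    also have "\<dots> \<le> (\<bar>Sp\<bar> + \<bar>Ss\<bar>) / \<tau>" by (intro divide_left_mono) (use tau g in auto)
    finally show ?thesis .
  qed
  have f1: "f \<theta> = Sp / \<tau> * exp (L * (0 - \<theta>))" if "\<theta> \<in> {0..1 - b} - {0}" for \<theta>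
  proof -
    have "\<lfloor>- \<theta>\<rfloor> = -1" using that b0 by (intro floor_unique) auto
    moreover have "\<lfloor>- \<theta> - b\<rfloor> = -1" using that b0 by (intro floor_unique) auto
    ultimately have "P \<theta> = \<theta>" "Q \<theta> = \<theta> + b" by (simp_all add: P_def Q_def)
    then show ?thesis using b0 unfolding f_def gx by (simp add: exp_minus field_simps)
  qed
  have f2: "f \<theta> = Ss / \<tau> * exp (L * ((1 - b) - \<theta>))" if "\<theta> \<in> {1 - b..1} - {1 - b, 1}" for \<theta>
  proof -
    have "\<lfloor>- \<theta>\<rfloor> = -1" using that b0 by (intro floor_unique) auto
    moreover have "\<lfloor>- \<theta> - b\<rfloor> = -2" using that b0 by (intro floor_unique) auto
    ultimately have PQ: "P \<theta> = \<theta>" "Q \<theta> = \<theta> + b - 1" by (simp_all add: P_def Q_def)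
    have "f \<theta> = Ss / (\<tau> * exp (L * (\<theta> + b - 1)))" unfolding f_def gx PQ using b0 by simp
    also have "exp (L * (\<theta> + b - 1)) = inverse (exp (L * ((1 - b) - \<theta>)))"
      by (simp add: exp_minus[symmetric] algebra_simps)
    finally show ?thesis by (simp add: field_simps)
  qed
  have i1: "((\<lambda>\<theta>. Sp / \<tau> * exp (L * (0 - \<theta>))) has_integral Sp / \<tau> * ((exp (L * (0 - 0)) - exp (L * (0 - (1 - b)))) / L)) {0..1 - b}"
    by (intro has_integral_mult_right exp_integral1) (use L0 b0 in auto)
  have i1': "(f has_integral Sp / \<tau> * ((1 - exp (- L * (1 - b))) / L)) {0..1 - b}"
  proof -
    have v1: "(exp (L * (0 - 0)) - exp (L * (0 - (1 - b)))) / L = (1 - exp (- L * (1 - b))) / L" by (simp add: algebra_simps)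
    show ?thesis by (rule has_integral_spike_finite[of "{0}", OF _ _ i1[unfolded v1]]) (auto simp: f1)
  qed
  have i2: "((\<lambda>\<theta>. Ss / \<tau> * exp (L * ((1 - b) - \<theta>))) has_integral Ss / \<tau> * ((exp (L * ((1 - b) - (1 - b))) - exp (L * ((1 - b) - 1))) / L)) {1 - b..1}"
    by (intro has_integral_mult_right exp_integral1) (use L0 b0 in auto)
  have i2': "(f has_integral Ss / \<tau> * ((1 - exp (- L * b)) / L)) {1 - b..1}"
  proof -
    have v2: "(exp (L * ((1 - b) - (1 - b))) - exp (L * ((1 - b) - 1))) / L = (1 - exp (- L * b)) / L" by (simp add: algebra_simps)
    show ?thesis by (rule has_integral_spike_finite[of "{1 - b, 1}", OF _ _ i2[unfolded v2]]) (auto simp: f2)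
  qed
  have I: "(f has_integral Sp / \<tau> * ((1 - exp (- L * (1 - b))) / L) + Ss / \<tau> * ((1 - exp (- L * b)) / L)) {0..1}"
    using has_integral_combine[OF _ _ i1' i2'] b0 by simp
  have e1: "exp (- L * (1 - b)) = \<alpha> / exp L" using eb by (simp add: algebra_simps exp_diff)
  have e2: "exp (- L * b) = 1 / \<alpha>" using eb by (simp add: exp_minus inverse_eq_divide)
  have EU: "E_unif f = Sp / \<tau> * ((1 - \<alpha> / exp L) / L) + Ss / \<tau> * ((1 - 1 / \<alpha>) / L)"
    using E_unif_hk[OF fmeas fbound I] unfolding e1 e2 .
  have kL: "real k / ln (real m) = 1 / L" by (simp add: L_def)
  show ?thesis unfolding fd r EU kL Sp_def[symmetric] Ss_def[symmetric]
    using L0 tau a1 by (simp add: field_simps)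
qed

end

theorem claim4p1:
  fixes m k :: nat and \<alpha> \<tau> :: real
  assumes "m \<ge> 2" and "k \<ge> 1"
    and "1 < \<alpha>" and "\<alpha> < real m powr (1 / real k)"
    and "\<tau> > 0"
  shows "(\<forall>t > 0. E_unif (\<lambda>\<theta>. next_grid m k \<alpha> \<theta> \<tau> t)
             = real k / ln (real m) * (\<alpha> + real m powr (1 / real k) / \<alpha> - 2) * t)
       \<and> (\<forall>t > 0. E_unif (\<lambda>\<theta>. 1 / next_grid m k \<alpha> \<theta> \<tau> t)
             = real k / ln (real m) * (2 - 1 / \<alpha> - \<alpha> / real m powr (1 / real k)) * (1 / t))
       \<and> E_unif (\<lambda>\<theta>. density_coeff m k \<alpha> \<theta> \<tau>)
             = real k / ln (real m)
               * ((1 - \<alpha> / real m powr (1 / real k)) * Sigma_prim m k \<alpha>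
                  + (1 - 1 / \<alpha>) * Sigma_sec m k \<alpha>) * (1 / \<tau>)"
proof (intro conjI allI impI)
  fix t :: real assume "t > 0"
  then show "E_unif (\<lambda>\<theta>. next_grid m k \<alpha> \<theta> \<tau> t)
             = real k / ln (real m) * (\<alpha> + real m powr (1 / real k) / \<alpha> - 2) * t"
    using part12(1)[OF assms] by blast
next
  fix t :: real assume "t > 0"
  then show "E_unif (\<lambda>\<theta>. 1 / next_grid m k \<alpha> \<theta> \<tau> t)
             = real k / ln (real m) * (2 - 1 / \<alpha> - \<alpha> / real m powr (1 / real k)) * (1 / t)"
    using part12(2)[OF assms] by blast
next
  show "E_unif (\<lambda>\<theta>. density_coeff m k \<alpha> \<theta> \<tau>)
             = real k / ln (real m)
               * ((1 - \<alpha> / real m powr (1 / real k)) * Sigma_prim m k \<alpha>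
                  + (1 - 1 / \<alpha>) * Sigma_sec m k \<alpha>) * (1 / \<tau>)"
    by (rule part3[OF assms])
qed

end
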